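(* For any grid $\mathcal G$ and any $\delta<c(\mathcal G)/2$, if $M$ is a finitely presented $n$-parameter persistence module then $d_I(\mathsf M^{\mathcal G}_\delta(M),M)\leq\delta$.
   Context: Modules are $\mathbb{R}^n$-graded modules over $P_n$ (monoid ring over a field of $([0,\infty)^n,+)$). A grid is $\mathcal G=\prod_i\mathcal G^i$, $\mathcal G^i:[k_i]\to\mathbb{R}$, with controlling constant $c(\mathcal G)=\min\{\|\vec a-\vec b\|_\infty:\vec a\ne\vec b\in\mathrm{Im}\,\mathcal G\}$. The merge function $\mathsf M^{\mathcal G}_\delta:\mathbb{R}^n\to\mathbb{R}^n$ acts coordinatewise by sending $x$ to $\mathcal G^i(k)$ if $x\in[\mathcal G^i(k)-\delta,\mathcal G^i(k)+\delta]$, else fixing $x$. Given a presentation $F_1\xrightarrow{p_1}F_0\to M$ with $F_0,F_1$ finitely generated free, $\mathsf M^{\mathcal G}_\delta(M)$ is the cokernel of the map obtained by replacing every generator grade $\vec g$ by $\mathsf M^{\mathcal G}_\delta(\vec g)$ and every monomial $\vec x^{\vec r-\vec b}$ in $p_1$ by $\vec x^{\mathsf M(\vec r)-\mathsf M(\vec b)}$. $d_I$ is the interleaving distance: $M,N$ are $\varepsilon$-interleaved if there are natural maps $M_{\vec a}\to N_{\vec a+\varepsilon\vec1}$, $N_{\vec a}\to M_{\vec a+\varepsilon\vec1}$ whose composites are the internal maps shifting by $2\varepsilon\vec1$; $d_I$ is the infimum of such $\varepsilon$. *)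

theory Defs
  imports "HOL-Analysis.Analysis"
begin

definition vle :: "real^'n::finite \<Rightarrow> real^'n \<Rightarrow> bool" where
  "vle a b \<longleftrightarrow> (\<forall>i. a $ i \<le> b $ i)"

definition vshift :: "real^'n::finite \<Rightarrow> real \<Rightarrow> real^'n" where
  "vshift a e = (\<chi> i. a $ i + e)"

definition grid_coord_im :: "('n::finite \<Rightarrow> nat \<Rightarrow> real) \<Rightarrow> ('n \<Rightarrow> nat) \<Rightarrow> 'n \<Rightarrow> real set" where
  "grid_coord_im G k i = G i ` {1..k i}"

definition grid_im :: "('n::finite \<Rightarrow> nat \<Rightarrow> real) \<Rightarrow> ('n \<Rightarrow> nat) \<Rightarrow> (real^'n) set" where
  "grid_im G k = {a. \<forall>i. a $ i \<in> grid_coord_im G k i}"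

text \<open>Controlling constant c(G) = min of the sup-norm distance of distinct grid points
  (extended real; it is +infinity when the grid has at most one point).\<close>

definition grid_const :: "('n::finite \<Rightarrow> nat \<Rightarrow> real) \<Rightarrow> ('n \<Rightarrow> nat) \<Rightarrow> ereal" where
  "grid_const G k = Inf ((\<lambda>(a, b). ereal (infnorm (a - b))) `
      {(a, b). a \<in> grid_im G k \<and> b \<in> grid_im G k \<and> a \<noteq> b})"

definition merge_coord :: "real set \<Rightarrow> real \<Rightarrow> real \<Rightarrow> real" where
  "merge_coord S \<delta> x =
     (if \<exists>y\<in>S. y - \<delta> \<le> x \<and> x \<le> y + \<delta> then (SOME y. y \<in> S \<and> y - \<delta> \<le> x \<and> x \<le> y + \<delta>) else x)"

definition merge :: "('n::finite \<Rightarrow> nat \<Rightarrow> real) \<Rightarrow> ('n \<Rightarrow> nat) \<Rightarrow> real \<Rightarrow> real^'n \<Rightarrow> real^'n" where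
  "merge G k \<delta> x = (\<chi> i. merge_coord (grid_coord_im G k i) \<delta> (x $ i))"

text \<open>A presentation F1 --p1--> F0 -> M with F0 free on generators e_0..e_{ngen-1}
  of grades ggr i, F1 free on generators f_0..f_{nrel-1} of grades rgr j, and
  p1(f_j) = sum_i coef i j * x^(rgr j - ggr i) e_i (homogeneous map; a monomial
  is only allowed when ggr i <= rgr j).\<close>

record ('k, 'n) pres =
  ngen :: nat
  ggr  :: "nat \<Rightarrow> real^'n"
  nrel :: nat
  rgr  :: "nat \<Rightarrow> real^'n"
  coef :: "nat \<Rightarrow> nat \<Rightarrow> 'k"

definition pres_wf :: "('k::field, 'n::finite) pres \<Rightarrow> bool" where
  "pres_wf P \<longleftrightarrow> (\<forall>i j. coef P i j \<noteq> 0 \<longrightarrow>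
       i < ngen P \<and> j < nrel P \<and> vle (ggr P i) (rgr P j))"

text \<open>Degree-a part of F0: coefficient vectors supported on generators of grade <= a
  (monomials are implicit: the element sum v_i x^(a - ggr i) e_i).\<close>

definition Fz :: "('k::field, 'n::finite) pres \<Rightarrow> real^'n \<Rightarrow> (nat \<Rightarrow> 'k) set" where
  "Fz P a = {v. \<forall>i. v i \<noteq> 0 \<longrightarrow> i < ngen P \<and> vle (ggr P i) a}"

definition Im1 :: "('k::field, 'n::finite) pres \<Rightarrow> real^'n \<Rightarrow> (nat \<Rightarrow> 'k) set" where
  "Im1 P a = {(\<lambda>i. \<Sum>j<nrel P. coef P i j * y j) | y.
                 \<forall>j. y j \<noteq> 0 \<longrightarrow> j < nrel P \<and> vle (rgr P j) a}"

text \<open>The module M = coker p1 has M_a = Fz P a / Im1 P a, with internal maps induced by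
  the inclusions Fz P a \<subseteq> Fz P b (a <= b).  A (graded) linear map M_a -> N_(a+eps)
  for all a, natural in a, is represented by a family of linear lifts
  f a : Fz P a -> Fz Q (a + eps) mapping Im1 P a into Im1 Q (a+eps)
  (over a field every linear map between the quotients lifts); naturality holds
  modulo the relations.\<close>

definition shift_mor ::
  "('k::field, 'n::finite) pres \<Rightarrow> ('k, 'n) pres \<Rightarrow> real \<Rightarrow>
   (real^'n \<Rightarrow> (nat \<Rightarrow> 'k) \<Rightarrow> (nat \<Rightarrow> 'k)) \<Rightarrow> bool" where
  "shift_mor P Q e f \<longleftrightarrow>
     (\<forall>a. (\<forall>u\<in>Fz P a. \<forall>v\<in>Fz P a. f a (\<lambda>i. u i + v i) = (\<lambda>i. f a u i + f a v i))
        \<and> (\<forall>c. \<forall>v\<in>Fz P a. f a (\<lambda>i. c * v i) = (\<lambda>i. c * f a v i))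
        \<and> f a ` Fz P a \<subseteq> Fz Q (vshift a e)
        \<and> f a ` Im1 P a \<subseteq> Im1 Q (vshift a e))
   \<and> (\<forall>a b. vle a b \<longrightarrow> (\<forall>v\<in>Fz P a. (\<lambda>i. f b v i - f a v i) \<in> Im1 Q (vshift b e)))"

definition interleaved ::
  "('k::field, 'n::finite) pres \<Rightarrow> ('k, 'n) pres \<Rightarrow> real \<Rightarrow> bool" where
  "interleaved P Q e \<longleftrightarrow>
     (\<exists>f g. shift_mor P Q e f \<and> shift_mor Q P e g
        \<and> (\<forall>a. \<forall>v\<in>Fz P a. (\<lambda>i. g (vshift a e) (f a v) i - v i) \<in> Im1 P (vshift a (2 * e)))
        \<and> (\<forall>a. \<forall>v\<in>Fz Q a. (\<lambda>i. f (vshift a e) (g a v) i - v i) \<in> Im1 Q (vshift a (2 * e))))"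

text \<open>Interleaving distance (extended real; +infinity if never interleaved).\<close>

definition dI :: "('k::field, 'n::finite) pres \<Rightarrow> ('k, 'n) pres \<Rightarrow> ereal" where
  "dI P Q = Inf (ereal ` {e. 0 \<le> e \<and> interleaved P Q e})"

definition merge_pres ::
  "('n::finite \<Rightarrow> nat \<Rightarrow> real) \<Rightarrow> ('n \<Rightarrow> nat) \<Rightarrow> real \<Rightarrow> ('k, 'n) pres \<Rightarrow> ('k, 'n) pres" where
  "merge_pres G k \<delta> P = P\<lparr>ggr := merge G k \<delta> \<circ> ggr P, rgr := merge G k \<delta> \<circ> rgr P\<rparr>"

end

theory Submission
  imports Defs
begin

lemma merge_coord_close:
  assumes "0 \<le> d"
  shows "\<bar>merge_coord S d x - x\<bar> \<le> d"
proof (cases "\<exists>y\<in>S. y - d \<le> x \<and> x \<le> y + d")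
  case True
  then have "\<exists>y. y \<in> S \<and> y - d \<le> x \<and> x \<le> y + d" by blast
  from someI_ex[OF this] True show ?thesis
    unfolding merge_coord_def by auto
next
  case False
  then show ?thesis using assms unfolding merge_coord_def by auto
qed

lemma merge_close:
  assumes "0 \<le> d"
  shows "\<bar>merge G k d x $ i - x $ i\<bar> \<le> d"
  unfolding merge_def using merge_coord_close[OF assms] by simp

lemma zero_Im1: "(\<lambda>i. 0) \<in> Im1 P a"
  unfolding Im1_def by (rule CollectI, rule exI[of _ "\<lambda>i. 0"]) (auto intro!: ext)

lemma Im1_mono:
  assumes "\<And>j. vle (rgr P j) a \<Longrightarrow> vle (rgr Q j) b" "nrel Q = nrel P" "coef Q = coef P"
  shows "Im1 P a \<subseteq> Im1 Q b"
proof
  fix w assume "w \<in> Im1 P a"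
  then obtain y where w: "w = (\<lambda>i. \<Sum>j<nrel P. coef P i j * y j)"
    and y: "\<forall>j. y j \<noteq> 0 \<longrightarrow> j < nrel P \<and> vle (rgr P j) a"
    unfolding Im1_def by blast
  have "\<forall>j. y j \<noteq> 0 \<longrightarrow> j < nrel Q \<and> vle (rgr Q j) b" using y assms(1,2) by simp
  moreover have "w = (\<lambda>i. \<Sum>j<nrel Q. coef Q i j * y j)" using w assms(2,3) by simp
  ultimately show "w \<in> Im1 Q b" unfolding Im1_def by blast
qed

lemma Fz_mono:
  assumes "\<And>j. vle (ggr P j) a \<Longrightarrow> vle (ggr Q j) b" "ngen Q = ngen P"
  shows "Fz P a \<subseteq> Fz Q b"
  unfolding Fz_def using assms by (simp add: subset_iff)

lemma shift_id:
  fixes P Q :: "('k::field, 'n::finite) pres"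
  assumes "\<And>j a. vle (rgr P j) a \<Longrightarrow> vle (rgr Q j) (vshift a e)" "nrel Q = nrel P" "coef Q = coef P"
    "\<And>j a. vle (ggr P j) a \<Longrightarrow> vle (ggr Q j) (vshift a e)" "ngen Q = ngen P"
  shows "shift_mor P Q e (\<lambda>a v. v)"
proof -
  have 1: "Im1 P a \<subseteq> Im1 Q (vshift a e)" for a
    by (rule Im1_mono) (use assms in auto)
  have 2: "Fz P a \<subseteq> Fz Q (vshift a e)" for a
    by (rule Fz_mono) (use assms in auto)
  have 3: "(\<lambda>i. v i - v i) = (\<lambda>i. 0)" for v :: "nat \<Rightarrow> 'k" by simp
  show ?thesis unfolding shift_mor_def image_ident 3 using 1 2 zero_Im1 by blast
qed

theorem mainTheorem7:
  fixes G :: "'n::finite \<Rightarrow> nat \<Rightarrow> real" and k :: "'n \<Rightarrow> nat" and \<delta> :: real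
    and P :: "('k::field, 'n) pres"
  assumes "pres_wf P"
    and "0 \<le> \<delta>"
    and "ereal \<delta> < grid_const G k / 2"
  shows "dI (merge_pres G k \<delta> P) P \<le> ereal \<delta>"
proof -
  let ?Q = "merge_pres G k \<delta> P"
  have A: "vle (merge G k \<delta> x) a \<Longrightarrow> vle x (vshift a \<delta>)" for x a :: "real^'n"
  proof -
    assume h: "vle (merge G k \<delta> x) a"
    have "x $ i \<le> a $ i + \<delta>" for i
      using h[unfolded vle_def, rule_format, of i] merge_close[OF assms(2), of G k x i] by linarith
    then show ?thesis unfolding vle_def vshift_def by simp
  qed
  have B: "vle x a \<Longrightarrow> vle (merge G k \<delta> x) (vshift a \<delta>)" for x a :: "real^'n"
  proof -
    assume h: "vle x a"
    have "merge G k \<delta> x $ i \<le> a $ i + \<delta>" for i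
      using h[unfolded vle_def, rule_format, of i] merge_close[OF assms(2), of G k x i] by linarith
    then show ?thesis unfolding vle_def vshift_def by simp
  qed
  have f: "shift_mor ?Q P \<delta> (\<lambda>a v. v)"
    by (rule shift_id) (simp_all add: merge_pres_def A)
  have g: "shift_mor P ?Q \<delta> (\<lambda>a v. v)"
    by (rule shift_id) (simp_all add: merge_pres_def B)
  have 3: "(\<lambda>i. v i - v i) = (\<lambda>i. 0)" for v :: "nat \<Rightarrow> 'k" by simp
  have "interleaved ?Q P \<delta>"
    unfolding interleaved_def
    by (rule exI[of _ "\<lambda>a v. v"], rule exI[of _ "\<lambda>a v. v"]) (simp add: f g zero_Im1)
  then have "ereal \<delta> \<in> ereal ` {e. 0 \<le> e \<and> interleaved ?Q P e}" using assms(2) by auto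
  then show ?thesis unfolding dI_def by (rule Inf_lower)
qed

end
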